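(* Let $P$ be a countable multiset of primes, $G=\bigoplus_{p\in P}\mathbb{F}_p$, let $X$ be an ergodic $G$-system, let $d\geq 0$, and let $q:G\times X\to S^1$ be a phase polynomial of degree $<d$ which is also a cocycle. Then for every $g\in G$, $q(g,\cdot)$ takes values in $C_m$, where $m=n^d$ and $n$ is the order of $g$.
   Context: $C_m$ is the group of $m$-th roots of unity. A $G$-system is a compact metrizable probability space with measure-preserving $G$-action $(T_g)$; ergodic: only constants invariant. $q$ is a phase polynomial of degree $<d$ if for each $g$, $\Delta_{h_1}\cdots\Delta_{h_d}q(g,\cdot)=1$ a.e. for all $h_i\in G$, where $\Delta_h\phi=(\phi\circ T_h)/\phi$. $q$ is a cocycle if $q(g+g',x)=q(g,x)q(g',T_gx)$. *)

theory Defs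
  imports "HOL-Probability.Probability"
begin

text \<open>The countable multiset of primes P is given by a countable index set I of naturals
  together with a labelling p : I -> primes (repetitions allowed).\<close>

definition dsum_carrier :: "nat set \<Rightarrow> (nat \<Rightarrow> nat) \<Rightarrow> (nat \<Rightarrow> nat) set" where
  "dsum_carrier I p = {g. (\<forall>i. i \<notin> I \<longrightarrow> g i = 0) \<and> (\<forall>i\<in>I. g i < p i) \<and> finite {i. g i \<noteq> 0}}"

definition dsum_add :: "nat set \<Rightarrow> (nat \<Rightarrow> nat) \<Rightarrow> (nat \<Rightarrow> nat) \<Rightarrow> (nat \<Rightarrow> nat) \<Rightarrow> (nat \<Rightarrow> nat)" where
  "dsum_add I p g h = (\<lambda>i. if i \<in> I then (g i + h i) mod p i else 0)"

definition dsum_zero :: "nat \<Rightarrow> nat" where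
  "dsum_zero = (\<lambda>i. 0)"

definition dsum_pow :: "nat set \<Rightarrow> (nat \<Rightarrow> nat) \<Rightarrow> nat \<Rightarrow> (nat \<Rightarrow> nat) \<Rightarrow> (nat \<Rightarrow> nat)" where
  "dsum_pow I p n g = (\<lambda>i. if i \<in> I then (n * g i) mod p i else 0)"

definition dsum_order :: "nat set \<Rightarrow> (nat \<Rightarrow> nat) \<Rightarrow> (nat \<Rightarrow> nat) \<Rightarrow> nat" where
  "dsum_order I p g = (LEAST n. n > 0 \<and> dsum_pow I p n g = dsum_zero)"

definition mp_action :: "nat set \<Rightarrow> (nat \<Rightarrow> nat) \<Rightarrow> 'a measure \<Rightarrow> ((nat \<Rightarrow> nat) \<Rightarrow> 'a \<Rightarrow> 'a) \<Rightarrow> bool" where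
  "mp_action I p M T \<longleftrightarrow>
     (\<forall>g\<in>dsum_carrier I p. T g \<in> measurable M M \<and> distr M M (T g) = M) \<and>
     (\<forall>x\<in>space M. T dsum_zero x = x) \<and>
     (\<forall>g\<in>dsum_carrier I p. \<forall>h\<in>dsum_carrier I p. \<forall>x\<in>space M.
         T (dsum_add I p g h) x = T g (T h x))"

definition ergodic_action :: "nat set \<Rightarrow> (nat \<Rightarrow> nat) \<Rightarrow> 'a measure \<Rightarrow> ((nat \<Rightarrow> nat) \<Rightarrow> 'a \<Rightarrow> 'a) \<Rightarrow> bool" where
  "ergodic_action I p M T \<longleftrightarrow>
     (\<forall>f \<in> borel_measurable M :: ('a \<Rightarrow> real) set.
        (\<forall>g\<in>dsum_carrier I p. AE x in M. f (T g x) = f x) \<longrightarrow> (\<exists>c. AE x in M. f x = c))"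

definition mderiv :: "((nat \<Rightarrow> nat) \<Rightarrow> 'a \<Rightarrow> 'a) \<Rightarrow> (nat \<Rightarrow> nat) \<Rightarrow> ('a \<Rightarrow> complex) \<Rightarrow> 'a \<Rightarrow> complex" where
  "mderiv T h \<phi> = (\<lambda>x. \<phi> (T h x) / \<phi> x)"

fun mderivs :: "((nat \<Rightarrow> nat) \<Rightarrow> 'a \<Rightarrow> 'a) \<Rightarrow> (nat \<Rightarrow> nat) list \<Rightarrow> ('a \<Rightarrow> complex) \<Rightarrow> 'a \<Rightarrow> complex" where
  "mderivs T [] \<phi> = \<phi>"
| "mderivs T (h # hs) \<phi> = mderiv T h (mderivs T hs \<phi>)"

definition phase_poly_lt :: "nat set \<Rightarrow> (nat \<Rightarrow> nat) \<Rightarrow> 'a measure \<Rightarrow> ((nat \<Rightarrow> nat) \<Rightarrow> 'a \<Rightarrow> 'a)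
     \<Rightarrow> nat \<Rightarrow> ((nat \<Rightarrow> nat) \<Rightarrow> 'a \<Rightarrow> complex) \<Rightarrow> bool" where
  "phase_poly_lt I p M T d q \<longleftrightarrow>
     (\<forall>g\<in>dsum_carrier I p. \<forall>hs. length hs = d \<and> set hs \<subseteq> dsum_carrier I p \<longrightarrow>
         (AE x in M. mderivs T hs (q g) x = 1))"

definition is_cocycle :: "nat set \<Rightarrow> (nat \<Rightarrow> nat) \<Rightarrow> 'a measure \<Rightarrow> ((nat \<Rightarrow> nat) \<Rightarrow> 'a \<Rightarrow> 'a)
     \<Rightarrow> ((nat \<Rightarrow> nat) \<Rightarrow> 'a \<Rightarrow> complex) \<Rightarrow> bool" where
  "is_cocycle I p M T q \<longleftrightarrow>
     (\<forall>g\<in>dsum_carrier I p. \<forall>g'\<in>dsum_carrier I p.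
         AE x in M. q (dsum_add I p g g') x = q g x * q g' (T g x))"

end

theory Submission
  imports Defs
begin

lemma mderivs_replicate_Suc:
  "mderivs T (replicate d g) (mderiv T g f) = mderivs T (replicate (Suc d) g) f"
  by (induction d) simp_all

lemma AE_transport_pow:
  assumes S: "S \<in> measurable M M" and D: "distr M M S = M"
    and P: "AE x in M. P x"
  shows "AE x in M. P ((S ^^ j) x)"
proof (induction j)
  case 0 then show ?case using P by simp
next
  case (Suc j)
  have "AE x in distr M M S. P ((S ^^ j) x)" unfolding D by (rule Suc.IH)
  from AE_distrD[OF S this] show ?case by (simp add: funpow_swap1)
qed

lemma funpow_space:
  assumes S: "S \<in> measurable M M" and x: "x \<in> space M"
  shows "(S ^^ j) x \<in> space M"
  using x by (induction j) (auto simp: measurable_space[OF S])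

lemma telescope:
  assumes "\<And>j. j \<le> k \<Longrightarrow> h j \<noteq> (0::complex)"
  shows "(\<Prod>j<k. h (Suc j) / h j) = h k / h 0"
  using assms
proof (induction k)
  case 0 then show ?case by simp
next
  case (Suc k)
  then show ?case by (simp add: field_simps)
qed

lemma key:
  fixes f :: "'a \<Rightarrow> complex"
  assumes S: "T g \<in> measurable M M" and D: "distr M M (T g) = M"
    and per: "\<forall>x\<in>space M. (T g ^^ n) x = x" and n: "n > 0"
  shows "(\<forall>x\<in>space M. cmod (f x) = 1) \<Longrightarrow>
     (AE x in M. mderivs T (replicate d g) f x = 1) \<Longrightarrow>
     (AE x in M. (\<Prod>j<n. f ((T g ^^ j) x)) = 1) \<Longrightarrow>
     AE x in M. f x ^ (n ^ d) = 1"
proof (induction d arbitrary: f)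
  case 0
  then show ?case by simp
next
  case (Suc d)
  let ?S = "T g"
  define f' where "f' = mderiv T g f"
  have nz: "\<And>x. x \<in> space M \<Longrightarrow> f x \<noteq> 0" using Suc.prems(1) by force
  have c1: "\<forall>x\<in>space M. cmod (f' x) = 1"
    using Suc.prems(1) measurable_space[OF S]
    by (auto simp: f'_def mderiv_def norm_divide)
  have c2: "AE x in M. mderivs T (replicate d g) f' x = 1"
    using Suc.prems(2) by (simp add: f'_def mderivs_replicate_Suc)
  have c3: "AE x in M. (\<Prod>j<n. f' ((?S ^^ j) x)) = 1"
  proof (rule AE_I2)
    fix x assume x: "x \<in> space M"
    have "(\<Prod>j<n. f' ((?S ^^ j) x)) = (\<Prod>j<n. f ((?S ^^ Suc j) x) / f ((?S ^^ j) x))"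
      by (simp add: f'_def mderiv_def)
    also have "\<dots> = f ((?S ^^ n) x) / f ((?S ^^ 0) x)"
      by (rule telescope[where h = "\<lambda>j. f ((?S ^^ j) x)"])
         (use nz funpow_space[OF S x] in auto)
    also have "\<dots> = 1" using per x nz by simp
    finally show "(\<Prod>j<n. f' ((?S ^^ j) x)) = 1" .
  qed
  have IH: "AE x in M. f' x ^ (n ^ d) = 1" using Suc.IH[OF c1 c2 c3] .
  define m where "m = n ^ d"
  have inv: "AE x in M. f (?S x) ^ m = f x ^ m"
    using IH AE_space
  proof (eventually_elim)
    case (elim x)
    have "f x ^ m \<noteq> 0" using nz[OF elim(2)] by simp
    then show ?case using elim(1) by (simp add: f'_def mderiv_def m_def power_divide field_simps)
  qed
  have inv2: "AE x in M. \<forall>j\<in>{..<n}. f ((?S ^^ j) x) ^ m = f x ^ m"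
  proof (rule AE_finite_allI, simp)
    fix j
    show "AE x in M. f ((?S ^^ j) x) ^ m = f x ^ m"
    proof (induction j)
      case 0 then show ?case by simp
    next
      case (Suc j)
      have "AE x in M. f (?S ((?S ^^ j) x)) ^ m = f ((?S ^^ j) x) ^ m"
        by (rule AE_transport_pow[OF S D inv])
      with Suc show ?case by eventually_elim simp
    qed
  qed
  show ?case
    using inv2 Suc.prems(3) AE_space
  proof (eventually_elim)
    case (elim x)
    have "1 = (\<Prod>j<n. f ((?S ^^ j) x)) ^ m" using elim(2) by simp
    also have "\<dots> = (\<Prod>j<n. f ((?S ^^ j) x) ^ m)" by (simp add: prod_power_distrib)
    also have "\<dots> = (\<Prod>j<n. f x ^ m)" using elim(1) by simp
    also have "\<dots> = f x ^ (n ^ Suc d)" by (simp add: m_def power_mult[symmetric] mult.commute)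
    finally show ?case by simp
  qed
qed

lemma zero_carrier:
  assumes "\<forall>i\<in>I. prime (p i)"
  shows "dsum_zero \<in> dsum_carrier I p"
  using assms by (auto simp: dsum_zero_def dsum_carrier_def prime_gt_0_nat)

lemma pow_carrier:
  assumes "\<forall>i\<in>I. prime (p i)" and g: "g \<in> dsum_carrier I p"
  shows "dsum_pow I p k g \<in> dsum_carrier I p"
proof -
  have "{i. dsum_pow I p k g i \<noteq> 0} \<subseteq> {i. g i \<noteq> 0}"
  proof
    fix i assume "i \<in> {i. dsum_pow I p k g i \<noteq> 0}"
    then show "i \<in> {i. g i \<noteq> 0}" by (cases "g i = 0") (auto simp: dsum_pow_def split: if_splits)
  qed
  moreover have "finite {i. g i \<noteq> 0}" using g by (simp add: dsum_carrier_def)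
  ultimately have fin: "finite {i. dsum_pow I p k g i \<noteq> 0}" by (rule finite_subset)
  have "\<forall>i\<in>I. dsum_pow I p k g i < p i" using assms(1)
    by (auto simp: dsum_pow_def prime_gt_0_nat)
  moreover have "\<forall>i. i \<notin> I \<longrightarrow> dsum_pow I p k g i = 0" by (simp add: dsum_pow_def)
  ultimately show ?thesis using fin unfolding dsum_carrier_def by blast
qed

lemma pow_0: "dsum_pow I p 0 g = dsum_zero"
  by (auto simp: dsum_pow_def dsum_zero_def)

lemma pow_Suc1: "dsum_add I p g (dsum_pow I p k g) = dsum_pow I p (Suc k) g"
proof
  fix i show "dsum_add I p g (dsum_pow I p k g) i = dsum_pow I p (Suc k) g i"
    using mod_add_right_eq[of "g i" "k * g i" "p i"] by (simp add: dsum_pow_def dsum_add_def)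
qed

lemma pow_Suc2: "dsum_add I p (dsum_pow I p k g) g = dsum_pow I p (Suc k) g"
proof
  fix i show "dsum_add I p (dsum_pow I p k g) g i = dsum_pow I p (Suc k) g i"
    using mod_add_left_eq[of "k * g i" "p i" "g i"] by (simp add: dsum_pow_def dsum_add_def add.commute)
qed

lemma add_zero: "dsum_add I p dsum_zero dsum_zero = dsum_zero"
  by (auto simp: dsum_add_def dsum_zero_def)

lemma order_exists:
  assumes pr: "\<forall>i\<in>I. prime (p i)" and g: "g \<in> dsum_carrier I p"
  shows "\<exists>n. n > 0 \<and> dsum_pow I p n g = dsum_zero"
proof -
  define A where "A = {i. g i \<noteq> 0}"
  have fin: "finite A" using g by (simp add: dsum_carrier_def A_def)
  have AI: "A \<subseteq> I" using g by (auto simp: dsum_carrier_def A_def)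
  define n where "n = (\<Prod>i\<in>A. p i)"
  have "n > 0" unfolding n_def using AI pr by (auto intro!: prod_pos simp: prime_gt_0_nat)
  moreover have "dsum_pow I p n g = dsum_zero"
  proof
    fix i
    show "dsum_pow I p n g i = dsum_zero i"
    proof (cases "i \<in> A")
      case True
      then have "p i dvd n" unfolding n_def by (rule dvd_prodI[OF fin])
      then show ?thesis by (auto simp: dsum_pow_def dsum_zero_def)
    next
      case False
      then show ?thesis by (auto simp: dsum_pow_def dsum_zero_def A_def)
    qed
  qed
  ultimately show ?thesis by blast
qed

theorem propositionB1:
  fixes I :: "nat set" and p :: "nat \<Rightarrow> nat"
    and M :: "'a::metric_space measure" and T :: "(nat \<Rightarrow> nat) \<Rightarrow> 'a \<Rightarrow> 'a"
    and q :: "(nat \<Rightarrow> nat) \<Rightarrow> 'a \<Rightarrow> complex" and d :: nat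
  assumes primes: "\<forall>i\<in>I. prime (p i)"
    and compact: "compact (UNIV :: 'a set)"
    and borel: "sets M = sets borel"
    and prob: "prob_space M"
    and action: "mp_action I p M T"
    and ergodic: "ergodic_action I p M T"
    and meas: "\<forall>g\<in>dsum_carrier I p. q g \<in> borel_measurable M"
    and circle: "\<forall>g\<in>dsum_carrier I p. \<forall>x\<in>space M. cmod (q g x) = 1"
    and phase: "phase_poly_lt I p M T d q"
    and cocycle: "is_cocycle I p M T q"
    and g: "g \<in> dsum_carrier I p"
  shows "AE x in M. q g x ^ (dsum_order I p g ^ d) = 1"
proof -
  define n where "n = dsum_order I p g"
  have nprop: "n > 0 \<and> dsum_pow I p n g = dsum_zero"
    unfolding n_def dsum_order_def using order_exists[OF primes g] by (rule LeastI_ex)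
  have Z: "dsum_zero \<in> dsum_carrier I p" using zero_carrier[OF primes] .
  have S: "T g \<in> measurable M M" and D: "distr M M (T g) = M"
    using action g by (auto simp: mp_action_def)
  have Tpow: "\<And>k x. x \<in> space M \<Longrightarrow> T (dsum_pow I p k g) x = (T g ^^ k) x"
  proof -
    fix k x assume x: "x \<in> space M"
    show "T (dsum_pow I p k g) x = (T g ^^ k) x"
    proof (induction k)
      case 0 then show ?case using action x by (simp add: pow_0 mp_action_def)
    next
      case (Suc k)
      have "T (dsum_pow I p (Suc k) g) x = T (dsum_add I p g (dsum_pow I p k g)) x"
        by (simp add: pow_Suc1)
      also have "\<dots> = T g (T (dsum_pow I p k g) x)"
        using action g pow_carrier[OF primes g] x by (auto simp: mp_action_def)
      finally show ?case using Suc by simp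
    qed
  qed
  have per: "\<forall>x\<in>space M. (T g ^^ n) x = x"
  proof
    fix x assume x: "x \<in> space M"
    have "(T g ^^ n) x = T (dsum_pow I p n g) x" using Tpow[OF x] by simp
    also have "\<dots> = x" using nprop action x by (simp add: mp_action_def)
    finally show "(T g ^^ n) x = x" .
  qed
  have q0: "AE x in M. q dsum_zero x = 1"
  proof -
    have "AE x in M. q (dsum_add I p dsum_zero dsum_zero) x = q dsum_zero x * q dsum_zero (T dsum_zero x)"
      using cocycle Z by (auto simp: is_cocycle_def)
    then show ?thesis using AE_space
    proof eventually_elim
      case (elim x)
      have "T dsum_zero x = x" using action elim(2) by (auto simp: mp_action_def)
      moreover have "q dsum_zero x \<noteq> 0" using circle Z elim(2) by force
      ultimately show ?case using elim(1) by (simp add: add_zero)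
    qed
  qed
  have prodk: "\<And>k. AE x in M. q (dsum_pow I p k g) x = (\<Prod>j<k. q g ((T g ^^ j) x))"
  proof -
    fix k show "AE x in M. q (dsum_pow I p k g) x = (\<Prod>j<k. q g ((T g ^^ j) x))"
    proof (induction k)
      case 0 then show ?case using q0 by (simp add: pow_0)
    next
      case (Suc k)
      have "AE x in M. q (dsum_add I p (dsum_pow I p k g) g) x
             = q (dsum_pow I p k g) x * q g (T (dsum_pow I p k g) x)"
        using cocycle g pow_carrier[OF primes g] by (auto simp: is_cocycle_def)
      with Suc AE_space show ?case
      proof eventually_elim
        case (elim x)
        then show ?case using Tpow[OF elim(2)] by (simp add: pow_Suc2)
      qed
    qed
  qed
  have P: "AE x in M. (\<Prod>j<n. q g ((T g ^^ j) x)) = 1"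
  proof -
    have e: "dsum_pow I p n g = dsum_zero" using nprop by simp
    show ?thesis using prodk[of n] q0 by eventually_elim (simp add: e)
  qed
  have ph: "AE x in M. mderivs T (replicate d g) (q g) x = 1"
  proof -
    have "set (replicate d g) \<subseteq> dsum_carrier I p" using g by (cases d) auto
    then show ?thesis using phase g unfolding phase_poly_lt_def by simp
  qed
  have c: "\<forall>x\<in>space M. cmod (q g x) = 1" using circle g by auto
  show ?thesis
    using key[OF S D per conjunct1[OF nprop] c ph P] by (simp add: n_def)
qed

end
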